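(* For every fixed integer $l \ge 2$ there is a constant $c$ depending only on $l$ such that, for all integers $q$ large enough and all $n > c q^2$, AME states of defect $l$ in $(\mathbb{C}^q)^{\otimes n}$ do not exist.
   Context: A pure state $|\psi\rangle \in (\mathbb{C}^q)^{\otimes n}$ is called $k$-uniform if, with $\rho = |\psi\rangle\langle\psi|$, for every subset $S \subseteq \{1,\dots,n\}$ with $|S| = k$ the reduced state of $\rho$ on the parties in $S$ equals $I/q^k$, where $I$ is the identity on $(\mathbb{C}^q)^{\otimes k}$. For an integer $l \ge 0$, an AME state of defect $l$ in $(\mathbb{C}^q)^{\otimes n}$ is a $(\lfloor n/2\rfloor - l)$-uniform state in $(\mathbb{C}^q)^{\otimes n}$. *)

theory Defs
  imports Complex_Main "HOL-Library.FuncSet"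
begin

text \<open>Computational basis of (C^q)^{tensor n}: configurations x : {0..<n} -> {0..<q}
  (extensional functions). A vector psi is a function from configurations to complex
  amplitudes; only its values on cfgs {..<n} q matter.\<close>

definition cfgs :: "nat set \<Rightarrow> nat \<Rightarrow> (nat \<Rightarrow> nat) set" where
  "cfgs S q = PiE S (\<lambda>_. {..<q})"

definition merge_cfg :: "nat set \<Rightarrow> (nat \<Rightarrow> nat) \<Rightarrow> (nat \<Rightarrow> nat) \<Rightarrow> (nat \<Rightarrow> nat)" where
  "merge_cfg S a y = (\<lambda>i. if i \<in> S then a i else y i)"

text \<open>Matrix entry (a,b) of the reduced state on parties S of rho = |psi><psi|,
  i.e. the partial trace over the complementary parties.\<close>
definition reduced_state ::
  "nat \<Rightarrow> nat \<Rightarrow> ((nat \<Rightarrow> nat) \<Rightarrow> complex) \<Rightarrow> nat set \<Rightarrow> (nat \<Rightarrow> nat) \<Rightarrow> (nat \<Rightarrow> nat) \<Rightarrow> complex" where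
  "reduced_state n q \<psi> S a b =
     (\<Sum>y\<in>cfgs ({..<n} - S) q. \<psi> (merge_cfg S a y) * cnj (\<psi> (merge_cfg S b y)))"

definition pure_state :: "nat \<Rightarrow> nat \<Rightarrow> ((nat \<Rightarrow> nat) \<Rightarrow> complex) \<Rightarrow> bool" where
  "pure_state n q \<psi> \<longleftrightarrow> (\<Sum>x\<in>cfgs {..<n} q. (cmod (\<psi> x))\<^sup>2) = 1"

definition k_uniform :: "nat \<Rightarrow> nat \<Rightarrow> nat \<Rightarrow> ((nat \<Rightarrow> nat) \<Rightarrow> complex) \<Rightarrow> bool" where
  "k_uniform n q k \<psi> \<longleftrightarrow> pure_state n q \<psi> \<and>
     (\<forall>S. S \<subseteq> {..<n} \<and> card S = k \<longrightarrow>
        (\<forall>a\<in>cfgs S q. \<forall>b\<in>cfgs S q.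
           reduced_state n q \<psi> S a b = (if a = b then 1 / (of_nat q) ^ k else 0)))"

definition AME_defect :: "nat \<Rightarrow> nat \<Rightarrow> nat \<Rightarrow> ((nat \<Rightarrow> nat) \<Rightarrow> complex) \<Rightarrow> bool" where
  "AME_defect n q l \<psi> \<longleftrightarrow> k_uniform n q (n div 2 - l) \<psi>"

end

theory Submission imports Defs begin

lemma sum_cfgs_insert:
  assumes "i \<notin> S"
  shows "(\<Sum>y\<in>cfgs (insert i S) q. f y) = (\<Sum>c<q. \<Sum>g\<in>cfgs S q. f (g(i:=c)))"
proof -
  have "(\<Sum>y\<in>cfgs (insert i S) q. f y) = (\<Sum>y\<in>(\<lambda>(c, g). g(i := c)) ` ({..<q} \<times> cfgs S q). f y)"
    unfolding cfgs_def by (simp add: PiE_insert_eq)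
  also have "\<dots> = (\<Sum>p\<in>{..<q} \<times> cfgs S q. f ((\<lambda>(c, g). g(i := c)) p))"
    apply (rule sum.reindex[unfolded comp_def])
    using inj_combinator[OF assms, of "\<lambda>_. {..<q}"] unfolding cfgs_def by simp
  also have "\<dots> = (\<Sum>c<q. \<Sum>g\<in>cfgs S q. f (g(i:=c)))"
    by (simp add: sum.cartesian_product split_beta)
  finally show ?thesis .
qed

lemma merge_cfg_upd_notin: "i \<notin> V \<Longrightarrow> merge_cfg V a (g(i:=c)) = (merge_cfg V a g)(i:=c)"
  unfolding merge_cfg_def by auto

lemma merge_cfg_insert_upd: "merge_cfg (insert i V) (a(i:=c)) y = (merge_cfg V a y)(i:=c)"
  unfolding merge_cfg_def by auto

lemma cfgs_finite: "finite S \<Longrightarrow> finite (cfgs S q)"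
  unfolding cfgs_def by (simp add: finite_PiE)

lemma card_cfgs: "finite S \<Longrightarrow> card (cfgs S q) = q ^ card S"
  unfolding cfgs_def by (simp add: card_PiE)

lemma sum_cfgs_split:
  assumes "A \<inter> B = {}"
  shows "(\<Sum>w\<in>cfgs (A \<union> B) q. f w) = (\<Sum>y\<in>cfgs A q. \<Sum>z\<in>cfgs B q. f (merge_cfg A y z))"
proof -
  have bij: "bij_betw (\<lambda>(y, z). merge_cfg A y z) (cfgs A q \<times> cfgs B q) (cfgs (A \<union> B) q)"
  proof (rule bij_betwI[where g = "\<lambda>w. (restrict w A, restrict w B)"])
    show "(\<lambda>(y, z). merge_cfg A y z) \<in> cfgs A q \<times> cfgs B q \<rightarrow> cfgs (A \<union> B) q"
      unfolding cfgs_def merge_cfg_def by (auto simp: PiE_iff extensional_def)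
    show "(\<lambda>w. (restrict w A, restrict w B)) \<in> cfgs (A \<union> B) q \<rightarrow> cfgs A q \<times> cfgs B q"
      unfolding cfgs_def by auto
  next
    fix p assume "p \<in> cfgs A q \<times> cfgs B q"
    then obtain y z where p: "p = (y, z)" "y \<in> cfgs A q" "z \<in> cfgs B q" by auto
    then show "(restrict (case p of (y, z) \<Rightarrow> merge_cfg A y z) A, restrict (case p of (y, z) \<Rightarrow> merge_cfg A y z) B) = p"
      using assms unfolding cfgs_def merge_cfg_def
      by (auto simp: PiE_iff extensional_def restrict_def fun_eq_iff)
  next
    fix w assume "w \<in> cfgs (A \<union> B) q"
    then show "(case (restrict w A, restrict w B) of (y, z) \<Rightarrow> merge_cfg A y z) = w"
      unfolding cfgs_def merge_cfg_def by (auto simp: PiE_iff extensional_def restrict_def fun_eq_iff)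
  qed
  have "(\<Sum>w\<in>cfgs (A \<union> B) q. f w) = (\<Sum>p\<in>cfgs A q \<times> cfgs B q. f (case p of (y, z) \<Rightarrow> merge_cfg A y z))"
    using sum.reindex_bij_betw[OF bij, of f] by simp
  also have "\<dots> = (\<Sum>y\<in>cfgs A q. \<Sum>z\<in>cfgs B q. f (merge_cfg A y z))"
    by (simp add: sum.cartesian_product split_beta)
  finally show ?thesis .
qed


definition trk :: "nat \<Rightarrow> nat set \<Rightarrow> nat set \<Rightarrow> ((nat\<Rightarrow>nat)\<Rightarrow>(nat\<Rightarrow>nat)\<Rightarrow>complex) \<Rightarrow> (nat\<Rightarrow>nat)\<Rightarrow>(nat\<Rightarrow>nat)\<Rightarrow>complex" where
 "trk q U V \<sigma> a b = (\<Sum>y\<in>cfgs (U - V) q. \<sigma> (merge_cfg V a y) (merge_cfg V b y))"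

definition nr :: "nat \<Rightarrow> nat set \<Rightarrow> nat set \<Rightarrow> ((nat\<Rightarrow>nat)\<Rightarrow>(nat\<Rightarrow>nat)\<Rightarrow>complex) \<Rightarrow> real" where
 "nr q U V \<sigma> = (\<Sum>a\<in>cfgs V q. \<Sum>b\<in>cfgs V q. (cmod (trk q U V \<sigma> a b))\<^sup>2)"

definition shQ :: "nat \<Rightarrow> nat set \<Rightarrow> nat set \<Rightarrow> ((nat\<Rightarrow>nat)\<Rightarrow>(nat\<Rightarrow>nat)\<Rightarrow>complex) \<Rightarrow> real" where
 "shQ q U0 U \<sigma> = (\<Sum>V\<in>Pow U. (-1)^(card U + card V) * real q ^ card V * nr q U0 V \<sigma>)"

definition sc :: "nat \<Rightarrow> nat \<Rightarrow> nat \<Rightarrow> ((nat\<Rightarrow>nat)\<Rightarrow>(nat\<Rightarrow>nat)\<Rightarrow>complex) \<Rightarrow> ((nat\<Rightarrow>nat)\<Rightarrow>(nat\<Rightarrow>nat)\<Rightarrow>complex)" where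
 "sc i c d \<sigma> = (\<lambda>x x'. \<sigma> (x(i:=c)) (x'(i:=d)))"

definition ssum :: "nat \<Rightarrow> nat \<Rightarrow> ((nat\<Rightarrow>nat)\<Rightarrow>(nat\<Rightarrow>nat)\<Rightarrow>complex) \<Rightarrow> ((nat\<Rightarrow>nat)\<Rightarrow>(nat\<Rightarrow>nat)\<Rightarrow>complex)" where
 "ssum q i \<sigma> = (\<lambda>x x'. \<Sum>c<q. \<sigma> (x(i:=c)) (x'(i:=c)))"

lemma nr_nonneg: "nr q U V \<sigma> \<ge> 0"
  unfolding nr_def by (intro sum_nonneg) auto

lemma trk_F1:
  assumes "i \<in> U0" "i \<notin> V"
  shows "trk q U0 V \<sigma> a b = trk q (U0 - {i}) V (ssum q i \<sigma>) a b"
proof -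
  have e: "U0 - V = insert i ((U0 - {i}) - V)" using assms by auto
  have "trk q U0 V \<sigma> a b = (\<Sum>c<q. \<Sum>g\<in>cfgs ((U0 - {i}) - V) q. \<sigma> (merge_cfg V a (g(i:=c))) (merge_cfg V b (g(i:=c))))"
    unfolding trk_def e by (rule sum_cfgs_insert) simp
  also have "\<dots> = (\<Sum>c<q. \<Sum>g\<in>cfgs ((U0 - {i}) - V) q. \<sigma> ((merge_cfg V a g)(i:=c)) ((merge_cfg V b g)(i:=c)))"
    using assms by (simp add: merge_cfg_upd_notin)
  also have "\<dots> = trk q (U0 - {i}) V (ssum q i \<sigma>) a b"
    unfolding trk_def ssum_def by (rule sum.swap)
  finally show ?thesis .
qed

lemma trk_ssum: "trk q U V (ssum q i \<sigma>) a b = (\<Sum>c<q. trk q U V (sc i c c \<sigma>) a b)"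
  unfolding trk_def ssum_def sc_def by (rule sum.swap)

lemma trk_diff: "trk q U V (\<lambda>x y. f x y - g x y) a b = trk q U V f a b - trk q U V g a b"
  unfolding trk_def by (simp add: sum_subtractf)

lemma trk_F2:
  assumes "i \<in> U0" "i \<notin> V"
  shows "trk q U0 (insert i V) \<sigma> (a(i:=c)) (b(i:=d)) = trk q (U0 - {i}) V (sc i c d \<sigma>) a b"
proof -
  have e: "U0 - insert i V = (U0 - {i}) - V" by auto
  show ?thesis unfolding trk_def e sc_def by (simp add: merge_cfg_insert_upd)
qed

lemma nr_F2:
  assumes "i \<in> U0" "i \<notin> V"
  shows "nr q U0 (insert i V) \<sigma> = (\<Sum>c<q. \<Sum>d<q. nr q (U0 - {i}) V (sc i c d \<sigma>))"
proof -
  have "nr q U0 (insert i V) \<sigma> = (\<Sum>c<q. \<Sum>a\<in>cfgs V q. \<Sum>d<q. \<Sum>b\<in>cfgs V q. (cmod (trk q U0 (insert i V) \<sigma> (a(i:=c)) (b(i:=d))))\<^sup>2)"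
    unfolding nr_def using assms by (simp add: sum_cfgs_insert)
  also have "\<dots> = (\<Sum>c<q. \<Sum>a\<in>cfgs V q. \<Sum>d<q. \<Sum>b\<in>cfgs V q. (cmod (trk q (U0 - {i}) V (sc i c d \<sigma>) a b))\<^sup>2)"
    using assms by (simp add: trk_F2)
  also have "\<dots> = (\<Sum>c<q. \<Sum>d<q. \<Sum>a\<in>cfgs V q. \<Sum>b\<in>cfgs V q. (cmod (trk q (U0 - {i}) V (sc i c d \<sigma>) a b))\<^sup>2)"
    by (rule sum.cong[OF refl], rule sum.swap)
  finally show ?thesis unfolding nr_def .
qed

lemma nr_F1:
  assumes "i \<in> U0" "i \<notin> V"
  shows "nr q U0 V \<sigma> = nr q (U0 - {i}) V (ssum q i \<sigma>)"
  unfolding nr_def using assms by (simp add: trk_F1)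

lemma cmod_sq_Re: "(cmod z)\<^sup>2 = Re (z * cnj z)"
  by (metis Re_complex_of_real complex_norm_square)

lemma sq_identity:
  fixes t :: "nat \<Rightarrow> complex"
  shows "real q * (\<Sum>c<q. (cmod (t c))\<^sup>2) - (cmod (\<Sum>c<q. t c))\<^sup>2
         = (1/2) * (\<Sum>c<q. \<Sum>c'<q. (cmod (t c - t c'))\<^sup>2)"
proof -
  have e1: "(cmod (t c - t c'))\<^sup>2 = (cmod (t c))\<^sup>2 + (cmod (t c'))\<^sup>2 - Re (t c * cnj (t c')) - Re (t c' * cnj (t c))" for c c'
    unfolding cmod_sq_Re by (simp add: algebra_simps)
  have e2: "Re (t c' * cnj (t c)) = Re (t c * cnj (t c'))" for c c'
    by simp
  have e3: "(cmod (\<Sum>c<q. t c))\<^sup>2 = (\<Sum>c<q. \<Sum>c'<q. Re (t c * cnj (t c')))"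
  proof -
    have "(\<Sum>c<q. t c) * cnj (\<Sum>c<q. t c) = (\<Sum>c<q. \<Sum>c'<q. t c * cnj (t c'))"
      by (simp add: cnj_sum sum_product)
    then show ?thesis unfolding cmod_sq_Re by (simp add: Re_sum)
  qed
  have e4: "(\<Sum>c<q. \<Sum>c'<q. (cmod (t c - t c'))\<^sup>2)
      = (\<Sum>c<q. \<Sum>c'<q. (cmod (t c))\<^sup>2) + (\<Sum>c<q. \<Sum>c'<q. (cmod (t c'))\<^sup>2) - 2 * (\<Sum>c<q. \<Sum>c'<q. Re (t c * cnj (t c')))"
    unfolding e1 e2 by (simp add: sum.distrib sum_subtractf sum_distrib_left)
  have e5: "(\<Sum>c<q. \<Sum>c'<q. (cmod (t c'))\<^sup>2) = (\<Sum>c<q. \<Sum>c'<q. (cmod (t c))\<^sup>2)"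
    by (rule sum.swap)
  have e6: "(\<Sum>c<q. \<Sum>c'<q. (cmod (t c))\<^sup>2) = real q * (\<Sum>c<q. (cmod (t c))\<^sup>2)"
    by (simp add: sum_distrib_left)
  show ?thesis using e3 e4 e5 e6 by linarith
qed


lemma swap3: "(\<Sum>c\<in>C. \<Sum>a\<in>A. \<Sum>b\<in>B. g c a b) = (\<Sum>a\<in>A. \<Sum>b\<in>B. \<Sum>c\<in>C. (g c a b :: real))"
  by (subst sum.swap, rule sum.cong[OF refl], rule sum.swap)

lemma swap4: "(\<Sum>c\<in>C. \<Sum>d\<in>D. \<Sum>a\<in>A. \<Sum>b\<in>B. g c d a b) = (\<Sum>a\<in>A. \<Sum>b\<in>B. \<Sum>c\<in>C. \<Sum>d\<in>D. (g c d a b :: real))"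
proof -
  have "(\<Sum>c\<in>C. \<Sum>d\<in>D. \<Sum>a\<in>A. \<Sum>b\<in>B. g c d a b) = (\<Sum>c\<in>C. \<Sum>a\<in>A. \<Sum>b\<in>B. \<Sum>d\<in>D. g c d a b)"
    by (rule sum.cong[OF refl], rule swap3)
  also have "\<dots> = (\<Sum>a\<in>A. \<Sum>b\<in>B. \<Sum>c\<in>C. \<Sum>d\<in>D. g c d a b)"
    by (rule swap3)
  finally show ?thesis .
qed

lemma nr_diag:
  "real q * (\<Sum>c<q. nr q U V (sc i c c \<sigma>)) - nr q U V (ssum q i \<sigma>)
   = (1/2) * (\<Sum>c<q. \<Sum>c'<q. nr q U V (\<lambda>x y. sc i c c \<sigma> x y - sc i c' c' \<sigma> x y))"
proof -
  define t where "t = (\<lambda>a b c. trk q U V (sc i c c \<sigma>) a b)"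
  have n1: "(\<Sum>c<q. nr q U V (sc i c c \<sigma>)) = (\<Sum>a\<in>cfgs V q. \<Sum>b\<in>cfgs V q. \<Sum>c<q. (cmod (t a b c))\<^sup>2)"
    unfolding nr_def t_def by (rule swap3)
  have n2: "nr q U V (ssum q i \<sigma>) = (\<Sum>a\<in>cfgs V q. \<Sum>b\<in>cfgs V q. (cmod (\<Sum>c<q. t a b c))\<^sup>2)"
    unfolding nr_def trk_ssum t_def ..
  have n3: "(\<Sum>c<q. \<Sum>c'<q. nr q U V (\<lambda>x y. sc i c c \<sigma> x y - sc i c' c' \<sigma> x y))
     = (\<Sum>a\<in>cfgs V q. \<Sum>b\<in>cfgs V q. \<Sum>c<q. \<Sum>c'<q. (cmod (t a b c - t a b c'))\<^sup>2)"
    unfolding nr_def trk_diff t_def by (rule swap4)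
  have "real q * (\<Sum>c<q. nr q U V (sc i c c \<sigma>)) - nr q U V (ssum q i \<sigma>)
      = (\<Sum>a\<in>cfgs V q. \<Sum>b\<in>cfgs V q. real q * (\<Sum>c<q. (cmod (t a b c))\<^sup>2) - (cmod (\<Sum>c<q. t a b c))\<^sup>2)"
    unfolding n1 n2 by (simp only: sum_distrib_left sum_subtractf)
  also have "\<dots> = (\<Sum>a\<in>cfgs V q. \<Sum>b\<in>cfgs V q. (1/2) * (\<Sum>c<q. \<Sum>c'<q. (cmod (t a b c - t a b c'))\<^sup>2))"
    by (simp only: sq_identity)
  also have "\<dots> = (1/2) * (\<Sum>c<q. \<Sum>c'<q. nr q U V (\<lambda>x y. sc i c c \<sigma> x y - sc i c' c' \<sigma> x y))"
    unfolding n3 by (simp only: sum_distrib_left)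
  finally show ?thesis .
qed

lemma shQ_diag:
  fixes U' :: "nat set"
  shows "real q * (\<Sum>c<q. shQ q U1 U' (sc i c c \<sigma>)) - shQ q U1 U' (ssum q i \<sigma>)
   = (1/2) * (\<Sum>c<q. \<Sum>c'<q. shQ q U1 U' (\<lambda>x y. sc i c c \<sigma> x y - sc i c' c' \<sigma> x y))"
proof -
  define w :: "nat set \<Rightarrow> real" where "w = (\<lambda>V. (-1::real)^(card U' + card V) * real q ^ card V)"
  have a: "(\<Sum>c<q. shQ q U1 U' (sc i c c \<sigma>)) = (\<Sum>V\<in>Pow U'. w V * (\<Sum>c<q. nr q U1 V (sc i c c \<sigma>)))"
    unfolding shQ_def w_def sum_distrib_left by (rule sum.swap)
  have b: "shQ q U1 U' (ssum q i \<sigma>) = (\<Sum>V\<in>Pow U'. w V * nr q U1 V (ssum q i \<sigma>))"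
    unfolding shQ_def w_def ..
  have c: "(\<Sum>c<q. \<Sum>c'<q. shQ q U1 U' (\<lambda>x y. sc i c c \<sigma> x y - sc i c' c' \<sigma> x y))
     = (\<Sum>V\<in>Pow U'. w V * (\<Sum>c<q. \<Sum>c'<q. nr q U1 V (\<lambda>x y. sc i c c \<sigma> x y - sc i c' c' \<sigma> x y)))"
  proof -
    have "(\<Sum>c<q. \<Sum>c'<q. shQ q U1 U' (\<lambda>x y. sc i c c \<sigma> x y - sc i c' c' \<sigma> x y))
       = (\<Sum>c<q. \<Sum>c'<q. \<Sum>V\<in>Pow U'. w V * nr q U1 V (\<lambda>x y. sc i c c \<sigma> x y - sc i c' c' \<sigma> x y))"
      unfolding shQ_def w_def ..
    also have "\<dots> = (\<Sum>c<q. \<Sum>V\<in>Pow U'. \<Sum>c'<q. w V * nr q U1 V (\<lambda>x y. sc i c c \<sigma> x y - sc i c' c' \<sigma> x y))"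
      by (rule sum.cong[OF refl], rule sum.swap)
    also have "\<dots> = (\<Sum>V\<in>Pow U'. \<Sum>c<q. \<Sum>c'<q. w V * nr q U1 V (\<lambda>x y. sc i c c \<sigma> x y - sc i c' c' \<sigma> x y))"
      by (rule sum.swap)
    finally show ?thesis by (simp only: sum_distrib_left)
  qed
  have "real q * (\<Sum>c<q. shQ q U1 U' (sc i c c \<sigma>)) - shQ q U1 U' (ssum q i \<sigma>)
     = (\<Sum>V\<in>Pow U'. w V * (real q * (\<Sum>c<q. nr q U1 V (sc i c c \<sigma>)) - nr q U1 V (ssum q i \<sigma>)))"
    unfolding a b by (simp only: sum_distrib_left sum_subtractf right_diff_distrib mult.left_commute)
  also have "\<dots> = (\<Sum>V\<in>Pow U'. w V * ((1/2) * (\<Sum>c<q. \<Sum>c'<q. nr q U1 V (\<lambda>x y. sc i c c \<sigma> x y - sc i c' c' \<sigma> x y))))"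
    by (simp only: nr_diag)
  also have "\<dots> = (1/2) * (\<Sum>c<q. \<Sum>c'<q. shQ q U1 U' (\<lambda>x y. sc i c c \<sigma> x y - sc i c' c' \<sigma> x y))"
    unfolding c by (simp only: sum_distrib_left mult.left_commute)
  finally show ?thesis .
qed


lemma inj_on_insert_Pow: "i \<notin> U \<Longrightarrow> inj_on (insert i) (Pow U)"
  unfolding inj_on_def by (metis PowD insert_ident subsetD)

lemma shQ_step:
  fixes U' :: "nat set"
  assumes fin: "finite U'" and iU: "i \<notin> U'" and iU0: "i \<in> U0"
  shows "shQ q U0 (insert i U') \<sigma> = real q * (\<Sum>c<q. \<Sum>d<q. shQ q (U0 - {i}) U' (sc i c d \<sigma>)) - shQ q (U0 - {i}) U' (ssum q i \<sigma>)"
proof -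
  define f where "f = (\<lambda>V. (-1::real)^(card (insert i U') + card V) * real q ^ card V * nr q U0 V \<sigma>)"
  have "shQ q U0 (insert i U') \<sigma> = (\<Sum>V\<in>Pow U'. f V) + (\<Sum>V\<in>insert i ` Pow U'. f V)"
    unfolding shQ_def f_def Pow_insert
    by (rule sum.union_disjoint) (use fin iU in auto)
  also have "(\<Sum>V\<in>insert i ` Pow U'. f V) = (\<Sum>V\<in>Pow U'. f (insert i V))"
    by (rule sum.reindex[OF inj_on_insert_Pow[OF iU], unfolded comp_def])
  also have "(\<Sum>V\<in>Pow U'. f V) = - shQ q (U0 - {i}) U' (ssum q i \<sigma>)"
  proof -
    have "f V = - ((-1::real)^(card U' + card V) * real q ^ card V * nr q (U0 - {i}) V (ssum q i \<sigma>))" if "V \<in> Pow U'" for V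
    proof -
      have "i \<notin> V" using that iU by auto
      then have "nr q U0 V \<sigma> = nr q (U0 - {i}) V (ssum q i \<sigma>)" using nr_F1 iU0 by blast
      then show ?thesis unfolding f_def using fin iU by simp
    qed
    then show ?thesis unfolding shQ_def by (simp add: sum_negf)
  qed
  also have "(\<Sum>V\<in>Pow U'. f (insert i V)) = real q * (\<Sum>c<q. \<Sum>d<q. shQ q (U0 - {i}) U' (sc i c d \<sigma>))"
  proof -
    have "f (insert i V) = real q * (\<Sum>c<q. \<Sum>d<q. (-1::real)^(card U' + card V) * real q ^ card V * nr q (U0 - {i}) V (sc i c d \<sigma>))"
      if "V \<in> Pow U'" for V
    proof -
      have iV: "i \<notin> V" using that iU by auto
      have fV: "finite V" using that fin finite_subset by auto
      have "f (insert i V) = (-1::real)^(card U' + card V) * (real q * real q ^ card V) * nr q U0 (insert i V) \<sigma>"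
        unfolding f_def using fin iU iV fV by (simp add: power_add)
      also have "\<dots> = real q * ((-1::real)^(card U' + card V) * real q ^ card V * (\<Sum>c<q. \<Sum>d<q. nr q (U0 - {i}) V (sc i c d \<sigma>)))"
        using nr_F2[OF iU0 iV] by simp
      finally show ?thesis by (simp add: sum_distrib_left)
    qed
    then have "(\<Sum>V\<in>Pow U'. f (insert i V)) = real q * (\<Sum>V\<in>Pow U'. \<Sum>c<q. \<Sum>d<q. (-1::real)^(card U' + card V) * real q ^ card V * nr q (U0 - {i}) V (sc i c d \<sigma>))"
      by (simp add: sum_distrib_left)
    also have "(\<Sum>V\<in>Pow U'. \<Sum>c<q. \<Sum>d<q. (-1::real)^(card U' + card V) * real q ^ card V * nr q (U0 - {i}) V (sc i c d \<sigma>))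
       = (\<Sum>c<q. \<Sum>d<q. \<Sum>V\<in>Pow U'. (-1::real)^(card U' + card V) * real q ^ card V * nr q (U0 - {i}) V (sc i c d \<sigma>))"
    proof -
      have "(\<Sum>V\<in>Pow U'. \<Sum>c<q. \<Sum>d<q. (-1::real)^(card U' + card V) * real q ^ card V * nr q (U0 - {i}) V (sc i c d \<sigma>))
         = (\<Sum>c<q. \<Sum>V\<in>Pow U'. \<Sum>d<q. (-1::real)^(card U' + card V) * real q ^ card V * nr q (U0 - {i}) V (sc i c d \<sigma>))"
        by (rule sum.swap)
      also have "\<dots> = (\<Sum>c<q. \<Sum>d<q. \<Sum>V\<in>Pow U'. (-1::real)^(card U' + card V) * real q ^ card V * nr q (U0 - {i}) V (sc i c d \<sigma>))"
        by (rule sum.cong[OF refl], rule sum.swap)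
      finally show ?thesis .
    qed
    finally show ?thesis unfolding shQ_def .
  qed
  finally show ?thesis by simp
qed

lemma shQ_nonneg:
  fixes U :: "nat set"
  assumes "finite U"
  shows "finite U0 \<Longrightarrow> U \<subseteq> U0 \<Longrightarrow> shQ q U0 U \<sigma> \<ge> 0"
  using assms
proof (induction U arbitrary: U0 \<sigma> rule: finite_induct)
  case empty
  then show ?case unfolding shQ_def by (simp add: nr_nonneg)
next
  case (insert i U')
  have iU0: "i \<in> U0" using insert by auto
  have sub: "U' \<subseteq> U0 - {i}" using insert by auto
  have fin1: "finite (U0 - {i})" using insert by auto
  have IH: "\<And>\<tau>. shQ q (U0 - {i}) U' \<tau> \<ge> 0" using insert.IH[OF fin1 sub] .
  have "(\<Sum>c<q. shQ q (U0 - {i}) U' (sc i c c \<sigma>)) \<le> (\<Sum>c<q. \<Sum>d<q. shQ q (U0 - {i}) U' (sc i c d \<sigma>))"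
  proof (rule sum_mono)
    fix c assume "c \<in> {..<q}"
    then show "shQ q (U0 - {i}) U' (sc i c c \<sigma>) \<le> (\<Sum>d<q. shQ q (U0 - {i}) U' (sc i c d \<sigma>))"
      using member_le_sum[of c "{..<q}" "\<lambda>d. shQ q (U0 - {i}) U' (sc i c d \<sigma>)"] IH by auto
  qed
  then have "real q * (\<Sum>c<q. shQ q (U0 - {i}) U' (sc i c c \<sigma>)) \<le> real q * (\<Sum>c<q. \<Sum>d<q. shQ q (U0 - {i}) U' (sc i c d \<sigma>))"
    by (simp add: mult_left_mono)
  moreover have "real q * (\<Sum>c<q. shQ q (U0 - {i}) U' (sc i c c \<sigma>)) - shQ q (U0 - {i}) U' (ssum q i \<sigma>) \<ge> 0"
    unfolding shQ_diag using IH by (simp add: sum_nonneg)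
  ultimately show ?case
    unfolding shQ_step[OF insert.hyps(1) insert.hyps(2) iU0] by linarith
qed


definition rho :: "((nat \<Rightarrow> nat) \<Rightarrow> complex) \<Rightarrow> (nat\<Rightarrow>nat)\<Rightarrow>(nat\<Rightarrow>nat)\<Rightarrow>complex" where
  "rho \<psi> = (\<lambda>x x'. \<psi> x * cnj (\<psi> x'))"

lemma trk_rho: "trk q {..<n} V (rho \<psi>) a b = reduced_state n q \<psi> V a b"
  unfolding trk_def rho_def reduced_state_def ..

lemma merge_in_cfgs:
  assumes "a \<in> cfgs A q" "y \<in> cfgs B q" "A \<inter> B = {}"
  shows "merge_cfg A a y \<in> cfgs (A \<union> B) q"
  using assms unfolding cfgs_def merge_cfg_def by (auto simp: PiE_iff extensional_def)

lemma merge_swap: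
  assumes "a \<in> cfgs A q" "y \<in> cfgs B q" "A \<inter> B = {}"
  shows "merge_cfg A a y = merge_cfg B y a"
  using assms unfolding cfgs_def merge_cfg_def by (auto simp: PiE_iff extensional_def fun_eq_iff)

lemma merge_inj:
  assumes "a \<in> cfgs A q" "b \<in> cfgs A q"
  shows "merge_cfg A a y = merge_cfg A b y \<longleftrightarrow> a = b"
proof
  assume h: "merge_cfg A a y = merge_cfg A b y"
  show "a = b"
  proof
    fix i show "a i = b i"
    proof (cases "i \<in> A")
      case True then show ?thesis using fun_cong[OF h, of i] unfolding merge_cfg_def by simp
    next
      case False then show ?thesis using assms unfolding cfgs_def by (auto simp: PiE_iff extensional_def)
    qed
  qed
qed simp

lemma nr_expand:
  "nr q U V (rho \<psi>) = Re (\<Sum>a\<in>cfgs V q. \<Sum>b\<in>cfgs V q. \<Sum>y\<in>cfgs (U - V) q. \<Sum>y'\<in>cfgs (U - V) q.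
      \<psi> (merge_cfg V a y) * cnj (\<psi> (merge_cfg V b y)) * cnj (\<psi> (merge_cfg V a y')) * \<psi> (merge_cfg V b y'))"
proof -
  have "trk q U V (rho \<psi>) a b * cnj (trk q U V (rho \<psi>) a b) =
     (\<Sum>y\<in>cfgs (U - V) q. \<Sum>y'\<in>cfgs (U - V) q.
      \<psi> (merge_cfg V a y) * cnj (\<psi> (merge_cfg V b y)) * cnj (\<psi> (merge_cfg V a y')) * \<psi> (merge_cfg V b y'))" for a b
    unfolding trk_def rho_def by (simp add: cnj_sum sum_product mult.assoc)
  then show ?thesis unfolding nr_def cmod_sq_Re by (simp add: Re_sum)
qed

lemma swap4c: "(\<Sum>c\<in>C. \<Sum>d\<in>D. \<Sum>a\<in>A. \<Sum>b\<in>B. g c d a b) = (\<Sum>a\<in>A. \<Sum>b\<in>B. \<Sum>c\<in>C. \<Sum>d\<in>D. (g c d a b :: complex))"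
proof -
  have s3: "(\<Sum>c\<in>C. \<Sum>a\<in>A. \<Sum>b\<in>B. h c a b) = (\<Sum>a\<in>A. \<Sum>b\<in>B. \<Sum>c\<in>C. (h c a b :: complex))" for C h
    by (subst sum.swap, rule sum.cong[OF refl], rule sum.swap)
  have "(\<Sum>c\<in>C. \<Sum>d\<in>D. \<Sum>a\<in>A. \<Sum>b\<in>B. g c d a b) = (\<Sum>c\<in>C. \<Sum>a\<in>A. \<Sum>b\<in>B. \<Sum>d\<in>D. g c d a b)"
    by (rule sum.cong[OF refl], rule s3)
  also have "\<dots> = (\<Sum>a\<in>A. \<Sum>b\<in>B. \<Sum>c\<in>C. \<Sum>d\<in>D. g c d a b)"
    by (rule s3)
  finally show ?thesis .
qed

lemma nr_compl:
  assumes "V \<subseteq> {..<n}"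
  shows "nr q {..<n} ({..<n} - V) (rho \<psi>) = nr q {..<n} V (rho \<psi>)"
proof -
  define Vc where "Vc = {..<n} - V"
  have e: "{..<n} - Vc = V" using assms unfolding Vc_def by auto
  have dj: "Vc \<inter> V = {}" unfolding Vc_def by auto
  have "nr q {..<n} Vc (rho \<psi>) = Re (\<Sum>a\<in>cfgs Vc q. \<Sum>b\<in>cfgs Vc q. \<Sum>y\<in>cfgs V q. \<Sum>y'\<in>cfgs V q.
      \<psi> (merge_cfg V y a) * cnj (\<psi> (merge_cfg V y b)) * cnj (\<psi> (merge_cfg V y' a)) * \<psi> (merge_cfg V y' b))"
    unfolding nr_expand e
    by (intro arg_cong[where f=Re] sum.cong refl) (simp add: merge_swap[OF _ _ dj])
  also have "\<dots> = Re (\<Sum>y\<in>cfgs V q. \<Sum>y'\<in>cfgs V q. \<Sum>a\<in>cfgs Vc q. \<Sum>b\<in>cfgs Vc q.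
      \<psi> (merge_cfg V y a) * cnj (\<psi> (merge_cfg V y b)) * cnj (\<psi> (merge_cfg V y' a)) * \<psi> (merge_cfg V y' b))"
    by (rule arg_cong[where f=Re], rule swap4c)
  also have "\<dots> = nr q {..<n} V (rho \<psi>)"
    unfolding nr_expand Vc_def
    by (intro arg_cong[where f=Re] sum.cong refl) (simp add: algebra_simps)
  finally show ?thesis unfolding Vc_def .
qed


lemma red_compose:
  assumes VS: "V \<subseteq> S'" and Sn: "S' \<subseteq> {..<n}"
  shows "reduced_state n q \<psi> V a b = (\<Sum>y\<in>cfgs (S' - V) q. reduced_state n q \<psi> S' (merge_cfg V a y) (merge_cfg V b y))"
proof -
  have e: "{..<n} - V = (S' - V) \<union> ({..<n} - S')" using VS Sn by auto
  have dj: "(S' - V) \<inter> ({..<n} - S') = {}" by auto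
  have m: "merge_cfg S' (merge_cfg V c y) z = merge_cfg V c (merge_cfg (S' - V) y z)" for c y z
    using VS by (auto simp: merge_cfg_def fun_eq_iff)
  show ?thesis
    unfolding reduced_state_def e sum_cfgs_split[OF dj] m ..
qed

lemma K1:
  assumes ku: "k_uniform n q k \<psi>" and q: "q \<ge> 1" and V: "V \<subseteq> {..<n}" and Vk: "card V \<le> k" and kn: "k \<le> n"
  shows "nr q {..<n} V (rho \<psi>) = 1 / real q ^ card V"
proof -
  have finV: "finite V" using V finite_subset by blast
  have cV: "card ({..<n} - V) = n - card V" using V finV by (simp add: card_Diff_subset)
  obtain T where T: "T \<subseteq> {..<n} - V" "card T = k - card V"
  proof -
    have "k - card V \<le> card ({..<n} - V)" using cV Vk kn by simp
    then show ?thesis using obtain_subset_with_card_n[of "k - card V" "{..<n} - V"] that by blast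
  qed
  define S' where "S' = V \<union> T"
  have finT: "finite T" using T(1) finite_subset by blast
  have VS: "V \<subseteq> S'" and Sn: "S' \<subseteq> {..<n}" using T V unfolding S'_def by auto
  have cS: "card S' = k" unfolding S'_def using T finV finT Vk
    by (subst card_Un_disjoint) auto
  have SV: "S' - V = T" unfolding S'_def using T by auto
  have SV2: "V \<union> (S' - V) = S'" using VS by auto
  have red: "reduced_state n q \<psi> V a b = (if a = b then 1 / of_nat q ^ card V else 0)"
    if a: "a \<in> cfgs V q" and b: "b \<in> cfgs V q" for a b
  proof -
    have "reduced_state n q \<psi> V a b = (\<Sum>y\<in>cfgs (S' - V) q. (if a = b then 1 / (of_nat q) ^ k else 0))"
      unfolding red_compose[OF VS Sn]
    proof (rule sum.cong[OF refl])
      fix y assume y: "y \<in> cfgs (S' - V) q"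
      have ma: "merge_cfg V a y \<in> cfgs S' q" using merge_in_cfgs[OF a y] SV2 by auto
      have mb: "merge_cfg V b y \<in> cfgs S' q" using merge_in_cfgs[OF b y] SV2 by auto
      have "reduced_state n q \<psi> S' (merge_cfg V a y) (merge_cfg V b y)
         = (if merge_cfg V a y = merge_cfg V b y then 1 / (of_nat q) ^ k else 0)"
        using ku Sn cS ma mb unfolding k_uniform_def by blast
      then show "reduced_state n q \<psi> S' (merge_cfg V a y) (merge_cfg V b y) = (if a = b then 1 / (of_nat q) ^ k else 0)"
        using merge_inj[OF a b] by simp
    qed
    also have "\<dots> = (if a = b then of_nat (q ^ (k - card V)) / (of_nat q) ^ k else 0)"
      using card_cfgs[of "S' - V" q] finT SV T by simp
    also have "\<dots> = (if a = b then 1 / of_nat q ^ card V else 0)"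
    proof -
      have "(of_nat q :: complex) ^ k = of_nat q ^ (k - card V) * of_nat q ^ card V"
        using Vk by (simp flip: power_add)
      moreover have "(of_nat q :: complex) \<noteq> 0" using q by simp
      ultimately show ?thesis by (simp add: field_simps)
    qed
    finally show ?thesis .
  qed
  have "nr q {..<n} V (rho \<psi>) = (\<Sum>a\<in>cfgs V q. \<Sum>b\<in>cfgs V q. (cmod (if a = b then 1 / of_nat q ^ card V else 0))\<^sup>2)"
    unfolding nr_def trk_rho by (intro sum.cong refl) (simp add: red)
  also have "\<dots> = (\<Sum>a\<in>cfgs V q. (1 / real q ^ card V)\<^sup>2)"
  proof (rule sum.cong[OF refl])
    fix a assume a: "a \<in> cfgs V q"
    have "(\<Sum>b\<in>cfgs V q. (cmod (if a = b then 1 / (of_nat q :: complex) ^ card V else 0))\<^sup>2)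
        = (\<Sum>b\<in>cfgs V q. (if a = b then (1 / real q ^ card V)\<^sup>2 else 0))"
      by (intro sum.cong refl) (simp add: norm_divide norm_power)
    also have "\<dots> = (1 / real q ^ card V)\<^sup>2"
      using a cfgs_finite[OF finV] by simp
    finally show "(\<Sum>b\<in>cfgs V q. (cmod (if a = b then 1 / (of_nat q :: complex) ^ card V else 0))\<^sup>2) = (1 / real q ^ card V)\<^sup>2" .
  qed
  also have "\<dots> = real (q ^ card V) * (1 / real q ^ card V)\<^sup>2"
    using card_cfgs[OF finV, of q] by simp
  also have "\<dots> = 1 / real q ^ card V"
    using q by (simp add: power2_eq_square field_simps)
  finally show ?thesis .
qed


lemma alt_pow_sum:
  assumes "finite T"
  shows "(\<Sum>W\<in>Pow T. (-1::real) ^ card W) = (if T = {} then 1 else 0)"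
  using assms
proof (induction T rule: finite_induct)
  case empty then show ?case by simp
next
  case (insert x F)
  have "(\<Sum>W\<in>Pow (insert x F). (-1::real) ^ card W) = (\<Sum>W\<in>Pow F. (-1::real) ^ card W) + (\<Sum>W\<in>insert x ` Pow F. (-1::real) ^ card W)"
    unfolding Pow_insert by (rule sum.union_disjoint) (use insert.hyps in auto)
  also have "(\<Sum>W\<in>insert x ` Pow F. (-1::real) ^ card W) = (\<Sum>W\<in>Pow F. (-1::real) ^ card (insert x W))"
    by (rule sum.reindex[OF inj_on_insert_Pow[OF insert.hyps(2)], unfolded comp_def])
  also have "\<dots> = (\<Sum>W\<in>Pow F. - ((-1::real) ^ card W))"
  proof (rule sum.cong[OF refl])
    fix W assume "W \<in> Pow F"
    then have "x \<notin> W" "finite W" using insert.hyps finite_subset by auto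
    then show "(-1::real) ^ card (insert x W) = - ((-1::real) ^ card W)" by simp
  qed
  finally show ?case by (simp add: sum_negf)
qed

lemma core_ineq:
  assumes ku: "k_uniform n q k \<psi>" and q: "q \<ge> 1" and k1: "1 \<le> k" and k2: "2 * k \<le> n"
  shows "real (n - k + 1) * (real q ^ (n - 2 * k) - 1) \<le> real (n - 2 * k) * (real q ^ (n - 2 * k + 2) - 1)"
proof -
  define N where "N = n - k + 1"
  define d where "d = n - 2 * k"
  define R where "R = {..<N}"
  define p where "p = (\<lambda>V. nr q {..<n} V (rho \<psi>))"
  define D where "D = (\<lambda>V. real q ^ card V * p V - 1)"
  define g where "g = (\<lambda>S. \<Sum>T\<in>Pow S. (-1::real) ^ card T * D T)"
  define A where "A = (\<lambda>T. (-1::real) ^ card T * g T)"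
  have Nn: "N \<le> n" unfolding N_def using k1 k2 by simp
  have Rn: "R \<subseteq> {..<n}" unfolding R_def using Nn by auto
  have finR: "finite R" unfolding R_def by simp
  have cR: "card R = N" unfolding R_def by simp
  have kn: "k \<le> n" using k2 by simp
  have psmall: "p V = 1 / real q ^ card V" if "V \<subseteq> {..<n}" "card V \<le> k" for V
    unfolding p_def using K1[OF ku q that kn] .
  have Dsmall: "D V = 0" if "V \<subseteq> {..<n}" "card V \<le> k" for V
    unfolding D_def using psmall[OF that] q by simp
  have Dsum: "D S = (\<Sum>T\<in>Pow S. A T)" if "finite S" for S
    unfolding A_def
    by (rule inclusion_exclusion_symmetric[where g = g]) (simp_all add: g_def that)
  have A_expand: "A T = (\<Sum>W\<in>Pow T. (-1::real) ^ (card T + card W) * D W)" for T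
    unfolding A_def g_def by (simp add: sum_distrib_left power_add mult.assoc)
  have A_zero: "A T = 0" if "T \<subseteq> {..<n}" "card T \<le> k" for T
  proof -
    have "finite T" using that finite_subset by blast
    have "D W = 0" if "W \<in> Pow T" for W
    proof -
      have "card W \<le> card T" using \<open>finite T\<close> that card_mono by auto
      then show ?thesis using Dsmall \<open>T \<subseteq> {..<n}\<close> \<open>card T \<le> k\<close> that by auto
    qed
    then show ?thesis unfolding A_expand by simp
  qed
  have A_nonneg: "A T \<ge> 0" if T: "T \<subseteq> {..<n}" for T
  proof (cases "T = {}")
    case True
    then show ?thesis using A_zero[of T] by simp
  next
    case False
    have finT: "finite T" using T finite_subset by blast
    have "A T = (\<Sum>W\<in>Pow T. (-1::real) ^ (card T + card W) * (real q ^ card W * p W))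
               - (-1::real) ^ card T * (\<Sum>W\<in>Pow T. (-1::real) ^ card W)"
      unfolding A_expand D_def by (simp add: right_diff_distrib sum_subtractf sum_distrib_left power_add)
    also have "(\<Sum>W\<in>Pow T. (-1::real) ^ card W) = 0" using alt_pow_sum[OF finT] False by simp
    also have "(\<Sum>W\<in>Pow T. (-1::real) ^ (card T + card W) * (real q ^ card W * p W)) = shQ q {..<n} T (rho \<psi>)"
      unfolding shQ_def p_def by (simp add: mult.assoc)
    finally have "A T = shQ q {..<n} T (rho \<psi>)" by simp
    then show ?thesis using shQ_nonneg[OF finT _ T] by simp
  qed
  have kd: "N = k + 1 + d" unfolding N_def d_def using k2 by simp
  have DR: "D R = real q ^ (d + 2) - 1"
  proof -
    have c1: "card ({..<n} - R) = k - 1" using Rn cR kd d_def k2 by (simp add: card_Diff_subset finR)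
    have "p R = p ({..<n} - R)"
      unfolding p_def using nr_compl[of "{..<n} - R" n q \<psi>] Rn by (simp add: double_diff)
    also have "\<dots> = 1 / real q ^ (k - 1)" using psmall[of "{..<n} - R"] c1 by simp
    finally have "p R = 1 / real q ^ (k - 1)" .
    moreover have "real q ^ N = real q ^ (d + 2) * real q ^ (k - 1)"
    proof -
      have "N = (d + 2) + (k - 1)" using kd k1 by simp
      then show ?thesis by (metis power_add)
    qed
    ultimately show ?thesis unfolding D_def cR using q by simp
  qed
  have DRx: "D (R - {x}) = real q ^ d - 1" if x: "x \<in> R" for x
  proof -
    have sub: "R - {x} \<subseteq> {..<n}" using Rn by auto
    have cx: "card (R - {x}) = N - 1" using x finR cR by simp
    have c1: "card ({..<n} - (R - {x})) = k" using sub cx kd d_def k2 by (simp add: card_Diff_subset finR)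
    have "p (R - {x}) = p ({..<n} - (R - {x}))"
      unfolding p_def using nr_compl[of "{..<n} - (R - {x})" n q \<psi>] sub by (simp add: double_diff)
    also have "\<dots> = 1 / real q ^ k" using psmall[of "{..<n} - (R - {x})"] c1 by simp
    finally have "p (R - {x}) = 1 / real q ^ k" .
    moreover have "real q ^ (N - 1) = real q ^ d * real q ^ k"
    proof -
      have "N - 1 = d + k" using kd by simp
      then show ?thesis by (metis power_add)
    qed
    ultimately show ?thesis unfolding D_def cx using q by simp
  qed
  have "(\<Sum>x\<in>R. D (R - {x})) = (\<Sum>x\<in>R. \<Sum>T\<in>Pow R. if x \<notin> T then A T else 0)"
  proof (rule sum.cong[OF refl])
    fix x assume "x \<in> R"
    have "D (R - {x}) = (\<Sum>T\<in>Pow (R - {x}). A T)" using Dsum finR by simp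
    also have "\<dots> = (\<Sum>T\<in>Pow R. if x \<notin> T then A T else 0)"
    proof -
      have "Pow (R - {x}) = {T \<in> Pow R. x \<notin> T}" by auto
      then show ?thesis using sum.inter_filter[of "Pow R" A "\<lambda>T. x \<notin> T"] finR by simp
    qed
    finally show "D (R - {x}) = (\<Sum>T\<in>Pow R. if x \<notin> T then A T else 0)" .
  qed
  also have "\<dots> = (\<Sum>T\<in>Pow R. \<Sum>x\<in>R. if x \<notin> T then A T else 0)"
    by (rule sum.swap)
  also have "\<dots> = (\<Sum>T\<in>Pow R. real (card (R - T)) * A T)"
  proof (rule sum.cong[OF refl])
    fix T assume "T \<in> Pow R"
    have e: "{x \<in> R. x \<notin> T} = R - T" by auto
    have "(\<Sum>x\<in>R. if x \<notin> T then A T else 0) = (\<Sum>x\<in>{x \<in> R. x \<notin> T}. A T)"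
      using sum.inter_filter[of R "\<lambda>_. A T" "\<lambda>x. x \<notin> T"] finR by simp
    then have "(\<Sum>x\<in>R. if x \<notin> T then A T else 0) = (\<Sum>x\<in>R - T. A T)" unfolding e .
    then show "(\<Sum>x\<in>R. if x \<notin> T then A T else 0) = real (card (R - T)) * A T" by simp
  qed
  also have "\<dots> \<le> (\<Sum>T\<in>Pow R. real d * A T)"
  proof (rule sum_mono)
    fix T assume TR: "T \<in> Pow R"
    then have Tn: "T \<subseteq> {..<n}" using Rn by auto
    show "real (card (R - T)) * A T \<le> real d * A T"
    proof (cases "card T \<le> k")
      case True then show ?thesis using A_zero[OF Tn] by simp
    next
      case False
      have "card (R - T) = N - card T" using TR finR cR by (simp add: card_Diff_subset finite_subset)
      then have "card (R - T) \<le> d" using False kd by simp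
      then show ?thesis using A_nonneg[OF Tn] by (simp add: mult_right_mono)
    qed
  qed
  also have "\<dots> = real d * D R"
    using Dsum[OF finR] by (simp add: sum_distrib_left)
  finally have main: "(\<Sum>x\<in>R. D (R - {x})) \<le> real d * D R" .
  have "(\<Sum>x\<in>R. D (R - {x})) = real N * (real q ^ d - 1)"
    using DRx cR by simp
  then show ?thesis using main DR unfolding N_def d_def by simp
qed


theorem corollary2:
  fixes l :: nat
  assumes "l \<ge> 2"
  shows "\<exists>c::real. \<exists>Q::nat. \<forall>q n. q \<ge> Q \<and> real n > c * (real q)\<^sup>2 \<longrightarrow>
           \<not> (\<exists>\<psi>. AME_defect n q l \<psi>)"
proof (intro exI allI impI notI)
  fix q n
  assume h: "2 \<le> q \<and> real n > 4 * (2 * real l + 1) * (real q)\<^sup>2"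
  assume "\<exists>\<psi>. AME_defect n q l \<psi>"
  then obtain \<psi> where ame: "AME_defect n q l \<psi>" by blast
  define k where "k = n div 2 - l"
  have ku: "k_uniform n q k \<psi>" using ame unfolding AME_defect_def k_def .
  have q2: "q \<ge> 2" using h by simp
  have rq: "real q \<ge> 2" using q2 by simp
  have qsq: "(real q)\<^sup>2 \<ge> 4" using power_mono[OF rq, of 2] by simp
  have nbig: "real n > 4 * (2 * real l + 1) * (real q)\<^sup>2" using h by simp
  have "4 * (2 * real l + 1) * (real q)\<^sup>2 \<ge> 4 * (2 * real l + 1) * 4"
    using qsq by (intro mult_left_mono) auto
  moreover have "4 * (2 * real l + 1) * 4 = 32 * real l + 16" by simp
  ultimately have "real n > 2 * real l + 2" using nbig by linarith
  then have n1: "n \<ge> 2 * l + 3" by linarith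
  then have k1: "1 \<le> k" unfolding k_def by linarith
  have k2: "2 * k \<le> n" unfolding k_def by linarith
  define d where "d = n - 2 * k"
  have dle: "d \<le> 2 * l + 1" unfolding d_def k_def using n1 by linarith
  have dge: "d \<ge> 2" unfolding d_def k_def using n1 assms by linarith
  define N where "N = n - k + 1"
  have core: "real N * (real q ^ d - 1) \<le> real d * (real q ^ (d + 2) - 1)"
    using core_ineq[OF ku _ k1 k2] q2 unfolding N_def d_def by simp
  define X where "X = real q ^ d"
  have "real q ^ d \<ge> real q ^ 2" using rq dge by (intro power_increasing) auto
  then have X4: "X \<ge> 4" using qsq unfolding X_def by simp
  have qd2: "real q ^ (d + 2) = (real q)\<^sup>2 * X" unfolding X_def by (simp add: power_add power2_eq_square)
  have "2 * N \<ge> n + 2" unfolding N_def using k2 by arith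
  then have "2 * real N \<ge> real n + 2" by linarith
  moreover have "real n > 4 * real d * (real q)\<^sup>2"
  proof -
    have "4 * real d * (real q)\<^sup>2 \<le> 4 * (2 * real l + 1) * (real q)\<^sup>2"
      using dle by (intro mult_right_mono) auto
    then show ?thesis using nbig by linarith
  qed
  ultimately have Nbig: "real N / 2 > real d * (real q)\<^sup>2" by linarith
  have h1: "real N * (X - 1) \<ge> real N / 2 * X"
  proof -
    have "X - 1 \<ge> X / 2" using X4 by linarith
    then have "real N * (X - 1) \<ge> real N * (X / 2)" by (intro mult_left_mono) auto
    then show ?thesis by simp
  qed
  have h2: "real N / 2 * X > real d * (real q)\<^sup>2 * X"
    using Nbig X4 by (intro mult_strict_right_mono) auto
  have h3: "real d * ((real q)\<^sup>2 * X - 1) \<le> real d * (real q)\<^sup>2 * X"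
    by (simp add: right_diff_distrib)
  show False using core h1 h2 h3 unfolding qd2 X_def[symmetric] by linarith
qed

end
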